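(* There exist a real number $d>1$, a family $\mathcal{H}$ of finite graphs with $\mu_{\log}(\mathcal{H})\le d$, and a real $\lambda\in(0,\lambda_c(d))$ such that $\lambda$ is an accumulation point of the zeros of the partition functions $\{Z_H: H\in\mathcal{H}\}$; in particular, no set of the form $\{z\in\mathbb{C}:|z-z_0|<\delta\text{ for some }z_0\in[0,\lambda_c(d))\}$ with $\delta>0$ is zero-free for all $Z_H$, $H\in\mathcal{H}$.
   Context: For a finite graph $G$, $Z_G(z)=\sum_I z^{|I|}$ over independent sets $I$ of $G$. A point $a$ is an accumulation point of the zeros of a family of functions if every neighborhood of $a$ contains a zero of some member of the family. A self-avoiding walk (SAW) of length $i$ from $v$ is a walk $v=v_0,\dots,v_i$ with all vertices distinct; $\mathcal{N}_{\le \ell}(G,v)$ is the number of SAWs of length between $1$ and $\ell$ starting at $v$. "$\mu_{\log}(\mathcal{H})\le d$" means: there exist constants $a,c$ such that for every $G=(V,E)\in\mathcal{H}$, every $v\in V$ and every $\ell\ge a\log|V|$, $\mathcal{N}_{\le\ell}(G,v)\le c\,d^\ell$. For $x>1$, $\lambda_c(x)=x^x/(x-1)^{x+1}$. *)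

theory Defs
  imports "HOL-Analysis.Analysis"
begin

type_synonym graph = "nat set \<times> (nat \<Rightarrow> nat \<Rightarrow> bool)"

definition verts :: "graph \<Rightarrow> nat set" where "verts G = fst G"
definition adj :: "graph \<Rightarrow> nat \<Rightarrow> nat \<Rightarrow> bool" where "adj G = snd G"

definition finite_graph :: "graph \<Rightarrow> bool" where
  "finite_graph G \<longleftrightarrow> finite (verts G)
     \<and> (\<forall>x y. adj G x y \<longrightarrow> x \<in> verts G \<and> y \<in> verts G)
     \<and> (\<forall>x y. adj G x y \<longrightarrow> adj G y x)
     \<and> (\<forall>x. \<not> adj G x x)"

definition independent_sets :: "graph \<Rightarrow> nat set set" where
  "independent_sets G = {I. I \<subseteq> verts G \<and> (\<forall>x\<in>I. \<forall>y\<in>I. \<not> adj G x y)}"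

definition indep_poly :: "graph \<Rightarrow> complex \<Rightarrow> complex" where
  "indep_poly G z = (\<Sum>I\<in>independent_sets G. z ^ card I)"

definition saws :: "graph \<Rightarrow> nat \<Rightarrow> nat \<Rightarrow> nat list set" where
  "saws G v i = {p. length p = i + 1 \<and> p ! 0 = v \<and> distinct p
      \<and> set p \<subseteq> verts G \<and> (\<forall>j<i. adj G (p ! j) (p ! Suc j))}"

definition num_saws_le :: "graph \<Rightarrow> nat \<Rightarrow> nat \<Rightarrow> nat" where
  "num_saws_le G v l = card (\<Union>i\<in>{1..l}. saws G v i)"

definition mu_log_le :: "graph set \<Rightarrow> real \<Rightarrow> bool" where
  "mu_log_le \<H> d \<longleftrightarrow> (\<exists>a c::real. \<forall>G\<in>\<H>. \<forall>v\<in>verts G. \<forall>l::nat.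
      real l \<ge> a * ln (real (card (verts G))) \<longrightarrow> real (num_saws_le G v l) \<le> c * d ^ l)"

definition lambda_c :: "real \<Rightarrow> real" where
  "lambda_c x = x powr x / (x - 1) powr (x + 1)"

definition zero_accumulation_point :: "graph set \<Rightarrow> complex \<Rightarrow> bool" where
  "zero_accumulation_point \<H> a \<longleftrightarrow>
     (\<forall>e>0. \<exists>H\<in>\<H>. \<exists>z. indep_poly H z = 0 \<and> dist z a < e)"

end

theory Submission
  imports Defs
begin

lemma sum_pow_card:
  fixes z :: complex
  assumes "finite A"
  shows "(\<Sum>S\<in>Pow A. z ^ card S) = (1 + z) ^ card A"
  using assms
proof (induction A rule: finite_induct)
  case empty
  then show ?case by simp
next
  case (insert a A)
  have disj: "Pow A \<inter> insert a ` Pow A = {}" using insert by auto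
  have inj: "inj_on (insert a) (Pow A)" using insert unfolding inj_on_def by (metis PowD insert_ident subsetD)
  have "(\<Sum>S\<in>Pow (insert a A). z ^ card S)
      = (\<Sum>S\<in>Pow A. z ^ card S) + (\<Sum>S\<in>insert a ` Pow A. z ^ card S)"
    unfolding Pow_insert using insert disj by (intro sum.union_disjoint) auto
  also have "(\<Sum>S\<in>insert a ` Pow A. z ^ card S) = (\<Sum>S\<in>Pow A. z ^ card (insert a S))"
    using inj by (simp add: sum.reindex)
  also have "\<dots> = (\<Sum>S\<in>Pow A. z * z ^ card S)"
  proof (rule sum.cong)
    fix S assume "S \<in> Pow A"
    then have "finite S" "a \<notin> S" using insert finite_subset by auto
    then show "z ^ card (insert a S) = z * z ^ card S" by simp
  qed simp
  also have "\<dots> = z * (1+z) ^ card A" using insert.IH by (metis sum_distrib_left)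
  finally show ?case using insert by (simp add: algebra_simps)
qed

lemma indep_split:
  fixes z :: complex and p :: "nat \<Rightarrow> nat"
  assumes "finite V" "W \<subseteq> V" "verts G = V" "\<And>x y. adj G x y \<longleftrightarrow> x \<in> W \<and> y \<in> W \<and> p x \<noteq> p y"
  shows "indep_poly G z = (\<Sum>S\<in>{S. S \<subseteq> W \<and> (\<forall>x\<in>S. \<forall>y\<in>S. p x = p y)}. z ^ card S)
          * (\<Sum>T\<in>Pow (V - W). z ^ card T)"
proof -
  let ?IW = "{S. S \<subseteq> W \<and> (\<forall>x\<in>S. \<forall>y\<in>S. p x = p y)}"
  have fW: "finite W" using assms finite_subset by blast
  have "(\<Sum>S\<in>?IW. z ^ card S) * (\<Sum>T\<in>Pow (V - W). z ^ card T)
     = (\<Sum>S\<in>?IW. \<Sum>T\<in>Pow (V - W). z ^ card S * z ^ card T)"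
    by (rule sum_product)
  also have "\<dots> = (\<Sum>(S,T)\<in>?IW \<times> Pow (V - W). z ^ card S * z ^ card T)"
    by (rule sum.cartesian_product)
  also have "\<dots> = (\<Sum>I\<in>independent_sets G. z ^ card I)"
  proof (rule sum.reindex_bij_witness[where i = "\<lambda>I. (I \<inter> W, I - W)" and j = "\<lambda>(S,T). S \<union> T"])
    fix a assume "a \<in> ?IW \<times> Pow (V - W)"
    then show "((\<lambda>(S,T). S \<union> T) a \<inter> W, (\<lambda>(S,T). S \<union> T) a - W) = a"
      by auto
  next
    fix a assume "a \<in> ?IW \<times> Pow (V - W)"
    then show "(\<lambda>(S,T). S \<union> T) a \<in> independent_sets G"
      using assms unfolding independent_sets_def by auto
  next
    fix b assume "b \<in> independent_sets G"
    then show "(\<lambda>(S,T). S \<union> T) (b \<inter> W, b - W) = b" by auto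
  next
    fix b assume "b \<in> independent_sets G"
    then show "(b \<inter> W, b - W) \<in> ?IW \<times> Pow (V - W)"
      using assms unfolding independent_sets_def by auto
  next
    fix a assume a: "a \<in> ?IW \<times> Pow (V - W)"
    obtain S T where st: "a = (S,T)" by force
    have fin: "finite S" "finite T" using a st fW assms(1) finite_subset by auto
    have "S \<inter> T = {}" using a st by auto
    then have "card (S \<union> T) = card S + card T" using fin card_Un_disjoint by blast
    then show "z ^ card ((\<lambda>(S,T). S \<union> T) a) = (\<lambda>(S,T). z ^ card S * z ^ card T) a"
      using st by (simp add: power_add)
  qed
  finally show ?thesis unfolding indep_poly_def by simp
qed


lemma multipartite_sum:
  fixes z :: complex and p :: "nat \<Rightarrow> nat"
  assumes "finite W"
  shows "(\<Sum>S\<in>{S. S \<subseteq> W \<and> (\<forall>x\<in>S. \<forall>y\<in>S. p x = p y)}. z ^ card S)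
         = 1 + (\<Sum>j\<in>p ` W. (1 + z) ^ card {x\<in>W. p x = j} - 1)"
proof -
  define P where "P j = Pow {x\<in>W. p x = j} - {{}}" for j
  define U where "U = (\<Union>j\<in>p ` W. P j)"
  define IW where "IW = {S. S \<subseteq> W \<and> (\<forall>x\<in>S. \<forall>y\<in>S. p x = p y)}"
  have eq: "IW = insert {} U"
  proof (intro equalityI subsetI)
    fix S assume S: "S \<in> IW"
    show "S \<in> insert {} U"
    proof (cases "S = {}")
      case True then show ?thesis by simp
    next
      case False
      then obtain x where x: "x \<in> S" by blast
      have S': "S \<subseteq> W \<and> (\<forall>a\<in>S. \<forall>b\<in>S. p a = p b)" using S unfolding IW_def by (rule CollectD)
      have SW: "S \<subseteq> W" using S' by (rule conjunct1)
      have Sp: "\<forall>y\<in>S. p y = p x"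
      proof
        fix y assume "y \<in> S"
        then show "p y = p x" using conjunct2[OF S'] x by blast
      qed
      have "S \<in> P (p x)" unfolding P_def using SW Sp False by blast
      moreover have "p x \<in> p ` W" using x SW by blast
      ultimately have "S \<in> U" unfolding U_def by (rule UN_I[rotated])
      then show ?thesis by (rule insertI2)
    qed
  next
    fix S assume "S \<in> insert {} U"
    then have "S = {} \<or> S \<in> U" by (rule insertE) simp_all
    then show "S \<in> IW"
    proof
      assume "S = {}" then show ?thesis unfolding IW_def by simp
    next
      assume "S \<in> U"
      then obtain j where "S \<in> P j" unfolding U_def by (rule UN_E)
      then have "S \<subseteq> {x\<in>W. p x = j}" unfolding P_def by blast
      then show ?thesis unfolding IW_def by blast
    qed
  qed
  have finP: "finite (P j)" for j unfolding P_def using assms by simp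
  have fin: "finite U" unfolding U_def using assms finP by simp
  have notin: "{} \<notin> U" unfolding U_def P_def by blast
  have "(\<Sum>S\<in>IW. z ^ card S) = 1 + (\<Sum>S\<in>U. z ^ card S)"
    unfolding eq by (simp only: sum.insert[OF fin notin] card.empty power_0)
  also have "(\<Sum>S\<in>U. z ^ card S) = (\<Sum>j\<in>p ` W. \<Sum>S\<in>P j. z ^ card S)"
    unfolding U_def
  proof (rule sum.UNION_disjoint)
    show "finite (p ` W)" using assms by simp
    show "\<forall>j\<in>p ` W. finite (P j)" using finP by simp
    show "\<forall>i\<in>p ` W. \<forall>j\<in>p ` W. i \<noteq> j \<longrightarrow> P i \<inter> P j = {}"
    proof (intro ballI impI)
      fix i j :: nat assume ij: "i \<noteq> j"
      have False if si: "S \<in> P i" and sj: "S \<in> P j" for S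
      proof -
        obtain x where "x \<in> S" using si unfolding P_def by blast
        then have "p x = i" "p x = j" using si sj unfolding P_def by blast+
        then show False using ij by simp
      qed
      then show "P i \<inter> P j = {}" by blast
    qed
  qed
  also have "\<dots> = (\<Sum>j\<in>p ` W. (1 + z) ^ card {x\<in>W. p x = j} - 1)"
  proof (rule sum.cong)
    fix j
    have f: "finite {x\<in>W. p x = j}" using assms by simp
    have "(\<Sum>S\<in>Pow {x\<in>W. p x = j}. z ^ card S) = z ^ card ({}::nat set) + (\<Sum>S\<in>P j. z ^ card S)"
      unfolding P_def by (rule sum.remove) (use f in simp_all)
    then show "(\<Sum>S\<in>P j. z ^ card S) = (1 + z) ^ card {x\<in>W. p x = j} - 1"
      using sum_pow_card[OF f, of z] by simp
  qed simp
  finally show ?thesis unfolding IW_def .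
qed

definition Dn :: "nat \<Rightarrow> nat" where "Dn k = (2^k + 2) * k"
definition prt :: "nat \<Rightarrow> nat \<Rightarrow> nat" where "prt k x = min (x div k) (2^k)"

lemma div_eq_iff_nat: "0 < (k::nat) \<Longrightarrow> x div k = j \<longleftrightarrow> j * k \<le> x \<and> x < j * k + k"
  by (metis Nat.le_imp_diff_is_add add_diff_inverse_nat
    div_times_less_eq_dividend le_add2 le_less_Suc_eq
    less_eq_div_iff_mult_less_eq mult_Suc not_add_less2)

lemma part_small:
  assumes "0 < k" "j < 2^k"
  shows "{x\<in>{0..<Dn k}. prt k x = j} = {j*k..<j*k+k}"
proof -
  have b: "j*k + k \<le> Dn k"
  proof -
    have "j*k + k = (j+1)*k" by simp
    also have "\<dots> \<le> (2^k+2)*k" using assms by (intro mult_right_mono) auto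
    finally show ?thesis unfolding Dn_def .
  qed
  have "prt k x = j \<longleftrightarrow> x div k = j" for x
    using assms unfolding prt_def by (auto simp: min_def)
  then show ?thesis using div_eq_iff_nat[OF assms(1)] b by auto
qed

lemma part_big:
  assumes "0 < k"
  shows "{x\<in>{0..<Dn k}. prt k x = 2^k} = {2^k*k..<2^k*k+2*k}"
proof -
  have iff1: "prt k x = 2^k \<longleftrightarrow> 2^k \<le> x div k" for x
    unfolding prt_def by (simp add: min_def) (metis eq_commute)
  have iff2: "2^k \<le> x div k \<longleftrightarrow> 2^k * k \<le> x" for x
    using assms by (simp add: less_eq_div_iff_mult_less_eq)
  have Deq: "Dn k = 2^k*k+2*k" unfolding Dn_def by (simp add: algebra_simps)
  show ?thesis
  proof (intro set_eqI)
    fix x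
    show "x \<in> {x\<in>{0..<Dn k}. prt k x = 2^k} \<longleftrightarrow> x \<in> {2^k*k..<2^k*k+2*k}"
      using iff1[of x] iff2[of x] Deq by simp blast
  qed
qed

lemma prt_image:
  assumes "0 < k"
  shows "prt k ` {0..<Dn k} = {0..2^k}"
proof (intro equalityI subsetI)
  fix j assume "j \<in> prt k ` {0..<Dn k}"
  then obtain x where "j = prt k x" by blast
  then have "j \<le> 2^k" unfolding prt_def by simp
  then show "j \<in> {0..2^k}" by simp
next
  fix j assume j: "j \<in> {0..(2::nat)^k}"
  then have jle: "j \<le> 2^k" by simp
  have "j * k < (2^k + 2) * k" using jle assms by (intro mult_strict_right_mono) simp_all
  then have lt: "j * k < Dn k" unfolding Dn_def .
  have "j * k div k = j" using assms by simp
  then have "prt k (j*k) = j" unfolding prt_def using jle by simp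
  moreover have "j * k \<in> {0..<Dn k}" using lt by simp
  ultimately show "j \<in> prt k ` {0..<Dn k}" by (metis image_eqI)
qed

lemma dense_sum:
  fixes z :: complex
  assumes "0 < k"
  shows "(\<Sum>S\<in>{S. S \<subseteq> {0..<Dn k} \<and> (\<forall>x\<in>S. \<forall>y\<in>S. prt k x = prt k y)}. z ^ card S)
     = ((1+z)^k)^2 + of_nat (2^k) * (1+z)^k - of_nat (2^k)"
proof -
  have "(\<Sum>S\<in>{S. S \<subseteq> {0..<Dn k} \<and> (\<forall>x\<in>S. \<forall>y\<in>S. prt k x = prt k y)}. z ^ card S)
     = 1 + (\<Sum>j\<in>{0..2^k}. (1 + z) ^ card {x\<in>{0..<Dn k}. prt k x = j} - 1)"
    using multipartite_sum[of "{0..<Dn k}" z "prt k"] prt_image[OF assms] by simp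
  also have "(\<Sum>j\<in>{0..2^k}. (1 + z) ^ card {x\<in>{0..<Dn k}. prt k x = j} - 1)
     = (\<Sum>j<2^k. (1 + z) ^ card {x\<in>{0..<Dn k}. prt k x = j} - 1) + ((1 + z) ^ card {x\<in>{0..<Dn k}. prt k x = 2^k} - 1)"
    by (simp add: atLeast0AtMost lessThan_Suc_atMost[symmetric])
  also have "(\<Sum>j<2^k. (1 + z) ^ card {x\<in>{0..<Dn k}. prt k x = j} - 1) = (\<Sum>j<(2::nat)^k. (1 + z) ^ k - 1)"
  proof (rule sum.cong)
    fix j assume "j \<in> {..<(2::nat)^k}"
    then have "{x\<in>{0..<Dn k}. prt k x = j} = {j*k..<j*k+k}" by (intro part_small[OF assms]) simp
    then have "card {x\<in>{0..<Dn k}. prt k x = j} = k" by (simp only: card_atLeastLessThan add_diff_cancel_left')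
    then show "(1 + z) ^ card {x\<in>{0..<Dn k}. prt k x = j} - 1 = (1 + z) ^ k - 1" by simp
  qed simp
  also have "card {x\<in>{0..<Dn k}. prt k x = 2^k} = 2 * k"
    by (simp only: part_big[OF assms] card_atLeastLessThan add_diff_cancel_left')
  finally have f: "(\<Sum>S\<in>{S. S \<subseteq> {0..<Dn k} \<and> (\<forall>x\<in>S. \<forall>y\<in>S. prt k x = prt k y)}. z ^ card S)
     = 1 + ((\<Sum>j<(2::nat)^k. (1 + z) ^ k - 1) + ((1 + z) ^ (2 * k) - 1))" .
  have e: "(1+z)^(2*k) = ((1+z)^k)^2" by (metis power_mult mult.commute)
  have sc: "(\<Sum>j<(2::nat)^k. (1 + z) ^ k - 1) = of_nat (2^k) * ((1 + z) ^ k - 1)"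
    by (simp only: sum_constant card_lessThan)
  have alg: "\<And>v a::complex. 1 + (a * (v - 1) + (v^2 - 1)) = v^2 + a * v - a"
    by (simp add: algebra_simps)
  show ?thesis unfolding f e sc by (rule alg)
qed


definition Nk :: "nat \<Rightarrow> real" where "Nk k = (2^k + sqrt ((2^k)^2 + 4*2^k))/2"
definition z0 :: "nat \<Rightarrow> complex" where "z0 k = of_real (root k (Nk k)) * cis (pi / real k) - 1"

lemma quad_aux:
  fixes a s :: real
  assumes "s^2 = a^2 + 4*a"
  shows "((a+s)/2)^2 - a*((a+s)/2) - a = 0"
proof -
  have "((a+s)/2)^2 - a*((a+s)/2) - a = (s^2 - a^2 - 4*a)/4"
    by (simp add: power2_eq_square field_simps)
  then show ?thesis using assms by simp
qed

lemma Nk_eq: "(Nk k)^2 - 2^k * Nk k - 2^k = 0"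
proof -
  define a :: real where "a = 2^k"
  have a0: "0 \<le> a" unfolding a_def by simp
  have s: "(sqrt (a^2 + 4*a))^2 = a^2 + 4*a" using a0 by simp
  have n: "Nk k = (a + sqrt (a^2 + 4*a))/2" unfolding Nk_def a_def by simp
  have "(Nk k)^2 - a * Nk k - a = 0" unfolding n by (rule quad_aux[OF s])
  then show ?thesis by (simp add: a_def)
qed

lemma sqrt_aux:
  fixes a :: real
  assumes "0 \<le> a"
  shows "a \<le> sqrt (a^2 + 4*a) \<and> sqrt (a^2 + 4*a) \<le> a + 2"
proof
  have "sqrt (a^2) \<le> sqrt (a^2 + 4*a)" using assms by (intro real_sqrt_le_mono) simp
  then show "a \<le> sqrt (a^2 + 4*a)" using assms by simp
  have "a^2 + 4*a \<le> (a+2)^2" by (simp add: power2_eq_square algebra_simps)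
  then have "sqrt (a^2 + 4*a) \<le> sqrt ((a+2)^2)" by (rule real_sqrt_le_mono)
  then show "sqrt (a^2 + 4*a) \<le> a + 2" using assms by simp
qed

lemma Nk_bounds: "2^k \<le> Nk k \<and> Nk k \<le> 2^k + 1"
proof -
  define a :: real where "a = 2^k"
  have a0: "0 \<le> a" unfolding a_def by simp
  have "Nk k = (a + sqrt (a^2 + 4*a))/2" unfolding Nk_def a_def by simp
  then have "a \<le> Nk k \<and> Nk k \<le> a + 1" using sqrt_aux[OF a0] by simp
  then show ?thesis unfolding a_def .
qed

lemma z0_pow:
  assumes "0 < k"
  shows "(1 + z0 k)^k = - of_real (Nk k)"
proof -
  have N0: "0 \<le> Nk k" using Nk_bounds[of k] by (meson order_trans zero_le_numeral zero_le_power)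
  have c: "cis (pi / real k) ^ k = cis (real k * (pi / real k))" by (rule Complex.DeMoivre)
  have c2: "real k * (pi / real k) = pi" using assms by simp
  have r: "root k (Nk k) ^ k = Nk k" using assms N0 by simp
  have "(1 + z0 k)^k = of_real (root k (Nk k)) ^ k * cis (pi / real k) ^ k"
    unfolding z0_def by (simp add: power_mult_distrib)
  also have "\<dots> = of_real (root k (Nk k) ^ k) * cis pi"
    unfolding c c2 by (simp only: of_real_power)
  also have "\<dots> = - of_real (Nk k)" unfolding r by simp
  finally show ?thesis .
qed

lemma quad_aux2:
  fixes N a :: real
  assumes "N^2 - a * N - a = 0"
  shows "(- complex_of_real N)^2 + complex_of_real a * (- complex_of_real N) - complex_of_real a = 0"
proof -
  have "(- complex_of_real N)^2 + complex_of_real a * (- complex_of_real N) - complex_of_real a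
      = complex_of_real (N^2 - a * N - a)" by simp
  then show ?thesis using assms by simp
qed

lemma dense_zero:
  assumes "0 < k"
  shows "((1+z0 k)^k)^2 + of_nat (2^k) * (1+z0 k)^k - of_nat (2^k) = 0"
proof -
  have e: "(of_nat (2^k) :: complex) = complex_of_real (2^k)" by simp
  show ?thesis unfolding z0_pow[OF assms] e by (rule quad_aux2[OF Nk_eq])
qed

lemma cis_minus_1: assumes "0 \<le> t" shows "cmod (cis t - 1) \<le> 2 * t"
proof -
  have "cmod (cis t - 1) \<le> \<bar>Re (cis t - 1)\<bar> + \<bar>Im (cis t - 1)\<bar>" by (rule cmod_le)
  also have "\<dots> = \<bar>cos t - 1\<bar> + \<bar>sin t\<bar>" by simp
  also have "\<bar>cos t - 1\<bar> \<le> t"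
  proof -
    have "cos t = cos (2 * (t/2))" by simp
    also have "\<dots> = 1 - 2 * (sin (t/2))^2" by (rule cos_double_sin)
    finally have "\<bar>cos t - 1\<bar> = 2 * (sin (t/2))^2" by simp
    also have "\<dots> \<le> 2 * \<bar>sin (t/2)\<bar>"
    proof -
      have "\<bar>sin (t/2)\<bar> * \<bar>sin (t/2)\<bar> \<le> \<bar>sin (t/2)\<bar> * 1"
        by (rule mult_left_mono) simp_all
      moreover have "(sin (t/2))^2 = \<bar>sin (t/2)\<bar> * \<bar>sin (t/2)\<bar>"
        by (simp add: power2_eq_square)
      ultimately show ?thesis by simp
    qed
    also have "\<dots> \<le> 2 * \<bar>t/2\<bar>" using abs_sin_x_le_abs_x[of "t/2"] by simp
    finally show ?thesis using assms by simp
  qed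
  also have "\<bar>sin t\<bar> \<le> t" using abs_sin_x_le_abs_x[of t] assms by simp
  finally show ?thesis by simp
qed


lemma z0_close:
  assumes "0 < k"
  shows "cmod (z0 k - 1) \<le> 36 / real k"
proof -
  define r where "r = root k (Nk k)"
  define N where "N = Nk k"
  have Nb: "2^k \<le> N" "N \<le> 2^k + 1" using Nk_bounds[of k] unfolding N_def by auto
  have N0: "0 \<le> N" using Nb(1) by (smt (verit) zero_le_power)
  have r0: "0 \<le> r" unfolding r_def using N0 N_def by (simp add: real_root_ge_zero)
  have rk: "r ^ k = N" unfolding r_def N_def using assms N0 N_def by simp
  have r2: "2 \<le> r"
  proof (rule ccontr)
    assume "\<not> 2 \<le> r"
    then have "r ^ k < 2 ^ k" using r0 assms by (intro power_strict_mono) auto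
    then show False using rk Nb by simp
  qed
  define x where "x = r/2 - 1"
  have x0: "0 \<le> x" unfolding x_def using r2 by simp
  have "1 + real k * x \<le> (1 + x)^k" using x0 by (intro Bernoulli_inequality) simp
  also have "(1 + x)^k = N / 2^k" unfolding x_def using rk by (simp add: power_divide)
  also have "\<dots> \<le> (2^k + 1) / 2^k" using Nb by (simp add: divide_right_mono)
  also have "\<dots> = 1 + 1 / 2^k" by (simp add: field_simps)
  also have "\<dots> \<le> 2" by simp
  finally have kx: "real k * x \<le> 1" by simp
  then have xk: "x \<le> 1 / real k" using assms by (simp add: field_simps mult.commute)
  have "1 / real k \<le> 1" using assms by simp
  then have xle: "x \<le> 1" using xk by linarith
  have r4: "r \<le> 4" using xle unfolding x_def by simp
  have rm2: "r - 2 \<le> 2 / real k" using xk unfolding x_def by simp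
  have t0: "0 \<le> pi / real k" by simp
  have "z0 k - 1 = of_real (r - 2) + of_real r * (cis (pi / real k) - 1)"
    unfolding z0_def r_def by (simp add: algebra_simps)
  then have "cmod (z0 k - 1) \<le> cmod (of_real (r - 2)) + cmod (of_real r * (cis (pi / real k) - 1))"
    by (metis norm_triangle_ineq)
  also have "\<dots> = \<bar>r - 2\<bar> + \<bar>r\<bar> * cmod (cis (pi / real k) - 1)"
    by (simp only: norm_of_real norm_mult)
  also have "\<dots> = (r - 2) + r * cmod (cis (pi / real k) - 1)"
    using r2 r0 by simp
  also have "\<dots> \<le> 2 / real k + 4 * (2 * (pi / real k))"
    using rm2 r4 r0 cis_minus_1[OF t0] by (intro add_mono mult_mono) auto
  also have "\<dots> \<le> 36 / real k"
    using pi_less_4 assms by (simp add: field_simps)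
  finally show ?thesis .
qed


definition Pn :: "nat \<Rightarrow> nat" where "Pn k = 3^(Dn k * Dn k)"
definition Hg :: "nat \<Rightarrow> graph" where
  "Hg k = ({0..<Dn k + Pn k}, \<lambda>x y. x < Dn k \<and> y < Dn k \<and> prt k x \<noteq> prt k y)"

lemma Hg_verts: "verts (Hg k) = {0..<Dn k + Pn k}" unfolding verts_def Hg_def by simp
lemma Hg_adj: "adj (Hg k) x y \<longleftrightarrow> x < Dn k \<and> y < Dn k \<and> prt k x \<noteq> prt k y"
  unfolding adj_def Hg_def by simp

lemma Hg_finite: "finite_graph (Hg k)"
  unfolding finite_graph_def Hg_verts Hg_adj by auto

lemma Hg_zero:
  assumes "0 < k"
  shows "indep_poly (Hg k) (z0 k) = 0"
proof -
  have "indep_poly (Hg k) (z0 k) =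
     (\<Sum>S\<in>{S. S \<subseteq> {0..<Dn k} \<and> (\<forall>x\<in>S. \<forall>y\<in>S. prt k x = prt k y)}. (z0 k) ^ card S)
          * (\<Sum>T\<in>Pow ({0..<Dn k + Pn k} - {0..<Dn k}). (z0 k) ^ card T)"
    by (rule indep_split) (auto simp: Hg_verts Hg_adj)
  also have "(\<Sum>S\<in>{S. S \<subseteq> {0..<Dn k} \<and> (\<forall>x\<in>S. \<forall>y\<in>S. prt k x = prt k y)}. (z0 k) ^ card S) = 0"
    using dense_sum[OF assms] dense_zero[OF assms] by simp
  finally show ?thesis by simp
qed

lemma geom_le: "(\<Sum>i\<le>n. (D::nat)^i) \<le> (D+1)^n"
proof (induction n)
  case 0 then show ?case by simp
next
  case (Suc n)
  have h: "D * D^n \<le> D * (D+1)^n" by (intro mult_le_mono2 power_mono) auto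
  have "(\<Sum>i\<le>Suc n. D^i) = (\<Sum>i\<le>n. D^i) + D * D^n" by simp
  also have "\<dots> \<le> (D+1)^n + D*(D+1)^n" using Suc.IH h by (rule add_mono)
  also have "\<dots> = (D+1)^Suc n" by simp
  finally show ?case .
qed

lemma saws_sub:
  assumes "1 \<le> i" "p \<in> saws (Hg k) v i"
  shows "p \<in> {xs. set xs \<subseteq> {0..<Dn k} \<and> length xs \<le> Dn k}"
proof -
  have len: "length p = i + 1" and dist: "distinct p"
    and step: "\<And>j. j < i \<Longrightarrow> adj (Hg k) (p ! j) (p ! Suc j)"
    using assms unfolding saws_def by auto
  have "p ! j < Dn k" if "j < length p" for j
  proof (cases "j < i")
    case True
    then show ?thesis using step[OF True] Hg_adj by blast
  next
    case False
    then have "j = Suc (i - 1)" "i - 1 < i" using that len assms(1) by auto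
    then show ?thesis using step[of "i - 1"] Hg_adj by metis
  qed
  then have s: "set p \<subseteq> {0..<Dn k}" by (auto simp: in_set_conv_nth)
  have "length p = card (set p)" using dist by (simp add: distinct_card)
  also have "\<dots> \<le> card {0..<Dn k}" using s by (intro card_mono) auto
  finally show ?thesis using s by simp
qed

lemma num_saws_bound:
  "num_saws_le (Hg k) v l \<le> 2 ^ (Dn k * Dn k)"
proof -
  let ?L = "{xs. set xs \<subseteq> {0..<Dn k} \<and> length xs \<le> Dn k}"
  have sub: "(\<Union>i\<in>{1..l}. saws (Hg k) v i) \<subseteq> ?L"
  proof
    fix p assume "p \<in> (\<Union>i\<in>{1..l}. saws (Hg k) v i)"
    then obtain i where "i \<in> {1..l}" "p \<in> saws (Hg k) v i" by blast
    then show "p \<in> ?L" using saws_sub[of i p k v] by simp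
  qed
  have "num_saws_le (Hg k) v l \<le> card ?L"
    unfolding num_saws_le_def using sub by (intro card_mono finite_lists_length_le) auto
  also have "\<dots> = (\<Sum>i\<le>Dn k. Dn k ^ i)" by (simp add: card_lists_length_le)
  also have "\<dots> \<le> (Dn k + 1) ^ Dn k" by (rule geom_le)
  also have "\<dots> \<le> (2 ^ Dn k) ^ Dn k" by (intro power_mono) (simp_all add: Suc_leI)
  also have "\<dots> = 2 ^ (Dn k * Dn k)" by (simp add: power_mult)
  finally show ?thesis .
qed


lemma lambda_c_2: "lambda_c 2 = 4"
  unfolding lambda_c_def by (simp add: powr_numeral)

lemma Hg_mu: "mu_log_le (Hg ` {k. 0 < k}) 2"
  unfolding mu_log_le_def
proof (intro exI[of _ 1] exI[of _ 1] ballI allI impI)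
  fix G v l assume G: "G \<in> Hg ` {k. 0 < k}" and v: "v \<in> verts G"
    and l: "1 * ln (real (card (verts G))) \<le> real l"
  obtain k where k: "G = Hg k" using G by blast
  let ?D = "Dn k * Dn k"
  have c: "card (verts G) = Dn k + Pn k" unfolding k Hg_verts by simp
  have "real ?D * 1 \<le> real ?D * ln 3" by (intro mult_left_mono) (use ln3_gt_1 in auto)
  then have "real ?D \<le> real ?D * ln 3" by simp
  also have "\<dots> = ln (3 ^ ?D)" by (simp add: ln_realpow)
  also have "\<dots> \<le> ln (real (card (verts G)))" unfolding c Pn_def by (subst ln_le_cancel_iff) (simp_all add: add_nonneg_pos)
  also have "\<dots> \<le> real l" using l by simp
  finally have "real ?D \<le> real l" .
  then have "?D \<le> l" by (simp only: of_nat_le_iff)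
  then have "(2::nat) ^ ?D \<le> 2 ^ l" by (simp add: power_increasing)
  moreover have "num_saws_le G v l \<le> 2 ^ ?D" using num_saws_bound[of k v l] k by simp
  ultimately have "num_saws_le G v l \<le> 2 ^ l" by (metis le_trans)
  then have "real (num_saws_le G v l) \<le> real (2 ^ l)" by (simp only: of_nat_le_iff)
  then show "real (num_saws_le G v l) \<le> 1 * 2 ^ l" by simp
qed

lemma Hg_acc: "zero_accumulation_point (Hg ` {k. 0 < k}) (complex_of_real 1)"
  unfolding zero_accumulation_point_def
proof (intro allI impI)
  fix e :: real assume e: "0 < e"
  define k where "k = nat \<lceil>36 / e\<rceil> + 1"
  have k0: "0 < k" unfolding k_def by simp
  have "36 / e < real k" unfolding k_def by linarith
  then have "36 < real k * e" using e by (simp add: field_simps)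
  then have lt: "36 / real k < e" using k0 by (simp add: field_simps)
  have "dist (z0 k) (complex_of_real 1) = cmod (z0 k - 1)" by (simp add: dist_norm)
  also have "\<dots> \<le> 36 / real k" by (rule z0_close[OF k0])
  finally have "dist (z0 k) (complex_of_real 1) < e" using lt by simp
  then show "\<exists>H\<in>Hg ` {k. 0 < k}. \<exists>z. indep_poly H z = 0 \<and> dist z (complex_of_real 1) < e"
    using Hg_zero[OF k0] k0 by blast
qed

theorem lemma3p2:
  shows "\<exists>d::real. d > 1 \<and> (\<exists>\<H>::graph set. (\<forall>G\<in>\<H>. finite_graph G) \<and> mu_log_le \<H> d
     \<and> (\<exists>lam::real. 0 < lam \<and> lam < lambda_c d
          \<and> zero_accumulation_point \<H> (complex_of_real lam)
          \<and> (\<forall>del>0. \<exists>H\<in>\<H>. \<exists>z. indep_poly H z = 0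
                 \<and> (\<exists>z0::real. 0 \<le> z0 \<and> z0 < lambda_c d \<and> cmod (z - complex_of_real z0) < del))))"
proof -
  let ?H = "Hg ` {k. 0 < k}"
  have A: "\<forall>G\<in>?H. finite_graph G" using Hg_finite by blast
  have B: "mu_log_le ?H 2" by (rule Hg_mu)
  have D: "(1::real) < lambda_c 2" by (simp add: lambda_c_2)
  have E: "zero_accumulation_point ?H (complex_of_real 1)" by (rule Hg_acc)
  have F: "\<forall>del>0. \<exists>H\<in>?H. \<exists>z. indep_poly H z = 0 \<and>
       (\<exists>z0::real. 0 \<le> z0 \<and> z0 < lambda_c 2 \<and> cmod (z - complex_of_real z0) < del)"
  proof (intro allI impI)
    fix del :: real assume "0 < del"
    then obtain H z where "H \<in> ?H" "indep_poly H z = 0" "dist z (complex_of_real 1) < del"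
      using E unfolding zero_accumulation_point_def by blast
    then show "\<exists>H\<in>?H. \<exists>z. indep_poly H z = 0 \<and>
       (\<exists>z0::real. 0 \<le> z0 \<and> z0 < lambda_c 2 \<and> cmod (z - complex_of_real z0) < del)"
      using D by (intro bexI[of _ H] exI[of _ z] conjI exI[of _ 1]) (auto simp: dist_norm)
  qed
  show ?thesis
    apply (rule exI[of _ "2::real"], rule conjI, simp, rule exI[of _ ?H], rule conjI, rule A,
        rule conjI, rule B, rule exI[of _ "1::real"], rule conjI, simp, rule conjI, rule D,
        rule conjI, rule E, rule F)
    done
qed

end
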